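(* Suppose system $(\Sigma)$ has stochastic relative degree $r$ at $\bar x$ and that the row vectors $\frac{\partial h}{\partial x}(\bar x),\frac{\partial \mathcal S_{f,l}h}{\partial x}(\bar x),\dots,\frac{\partial \mathcal S^{r-1}_{f,l}h}{\partial x}(\bar x)$ are linearly independent. Set $\phi_i(x)=\mathcal S^{i-1}_{f,l}h(x)$ for $i=1,\dots,r$. If $r<n$, there exist smooth real-valued functions $\phi_{r+1},\dots,\phi_n$ such that the Jacobian of $\Phi(x)=[\phi_1(x),\dots,\phi_n(x)]^\top$ is invertible at $\bar x$, so that $\Phi$ is a coordinate transformation on a neighbourhood of $\bar x$. In the coordinates $z_t=\Phi(x_t)$ system $(\Sigma)$ reads $$\dot z_i=z_{i+1}\ (i=1,\dots,r-1),\quad \dot z_r=c(\xi_t,z_t)+b(\xi_t,z_t)u+a(z_t)u^2,$$ $$\dot z_j=p_j(\xi_t,z_t)+q_j(\xi_t,z_t)u+s_j(z_t)u^2\ (j=r+1,\dots,n),\quad y_t=z_1,$$ where $c(\xi,z)=\mathcal S^r_{f,l}h(\xi,\Phi^{-1}(z))$, $b(\xi,z)=\mathcal A_{l,m,g}\mathcal S^{r-1}_{f,l}h(\xi,\Phi^{-1}(z))$, $a(z)=\frac12H_{m,m}\mathcal S^{r-1}_{f,l}h(\Phi^{-1}(z))$, $p_j(\xi,z)=\mathcal S_{f,l}\phi_j(\xi,\Phi^{-1}(z))$, $q_j(\xi,z)=\mathcal A_{l,m,g}\phi_j(\xi,\Phi^{-1}(z))$, $s_j(z)=\frac12H_{m,m}\phi_j(\Phi^{-1}(z))$;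 in particular $c,b,p_j,q_j$ are affine in $\xi$.
   Context: System $(\Sigma)$: $dx_t=(f(x_t)+g(x_t)u)dt+(l(x_t)+m(x_t)u)d\mathcal W_t$, $y_t=h(x_t)$, Itô sense, $x_t\in\mathbb R^n$, $u,y_t\in\mathbb R$, all maps smooth, $\mathcal W_t$ scalar standard Brownian motion, unique solutions; equivalently $\dot x_t=f+gu+(l+mu)\xi_t$ with $\xi_t=\dot{\mathcal W}_t$ generalised white noise; derivatives computed by Itô's formula. Notation: $L_fh=\frac{\partial h}{\partial x}f$; $H_{f,g}h=g^\top\frac{\partial^2h}{\partial x^2}f$; $\mathcal S_{f,l}h(\xi,x)=L_fh(x)+L_lh(x)\xi+\frac12H_{l,l}h(x)$ (defined for any smooth $h$), iterates $\mathcal S^k_{f,l}h=\mathcal S_{f,l}\mathcal S^{k-1}_{f,l}h$ defined when $\mathcal S^{k-1}_{f,l}h$ does not depend on $\xi$, $\mathcal S^0_{f,l}h=h$; $\mathcal A_{l,m,g}h(\xi,x)=L_gh(x)+L_mh(x)\xi+H_{l,m}h(x)$. Stochastic relative degree $r$ at $\bar x$: (ND) $L_l\mathcal S^k_{f,l}h=0$ and $L_m\mathcal S^k_{f,l}h=0$ near $\bar x$ for $k\in\{0,\dots,r-2\}$; (CD) $L_g\mathcal S^k_{f,l}h+H_{l,m}\mathcal S^k_{f,l}h=0$, $L_m\mathcal S^k_{f,l}h=0$, $H_{m,m}\mathcal S^k_{f,l}h=0$ near $\bar x$ for $k\in\{0,\dots,r-2\}$; (RD) at $\bar x$, $L_g\mathcal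 S^{r-1}_{f,l}h+H_{l,m}\mathcal S^{r-1}_{f,l}h\ne0$ or $L_m\mathcal S^{r-1}_{f,l}h\ne0$ or $H_{m,m}\mathcal S^{r-1}_{f,l}h\ne0$. *)

theory Defs
  imports "HOL-Analysis.Analysis"
begin

text \<open>State space R^n is rendered as real^'n, with n = CARD('n).
  Vector fields are maps real^'n => real^'n, scalar functions real^'n => real.\<close>

definition pd :: "'n::finite \<Rightarrow> (real^'n \<Rightarrow> real) \<Rightarrow> real^'n \<Rightarrow> real" where
  "pd j h x = deriv (\<lambda>t. h (x + t *\<^sub>R axis j 1)) 0"

fun iter_pd :: "'n::finite list \<Rightarrow> (real^'n \<Rightarrow> real) \<Rightarrow> real^'n \<Rightarrow> real" where
  "iter_pd [] h = h"
| "iter_pd (j # js) h = pd j (iter_pd js h)"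

text \<open>C-infinity: every iterated partial derivative exists and is (Frechet) differentiable
  everywhere.\<close>
definition smooth_fun :: "(real^'n::finite \<Rightarrow> real) \<Rightarrow> bool" where
  "smooth_fun h \<longleftrightarrow> (\<forall>js x. iter_pd js h differentiable (at x))"

definition smooth_vf :: "(real^'n::finite \<Rightarrow> real^'n) \<Rightarrow> bool" where
  "smooth_vf f \<longleftrightarrow> (\<forall>i. smooth_fun (\<lambda>x. f x $ i))"

text \<open>Lie derivative L_f h = (dh/dx) f.\<close>
definition Lie :: "(real^'n::finite \<Rightarrow> real^'n) \<Rightarrow> (real^'n \<Rightarrow> real) \<Rightarrow> real^'n \<Rightarrow> real" where
  "Lie f h x = (\<Sum>j\<in>UNIV. pd j h x * f x $ j)"

text \<open>H_{f,g} h = g^T (d^2 h / dx^2) f.\<close>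
definition Hess :: "(real^'n::finite \<Rightarrow> real^'n) \<Rightarrow> (real^'n \<Rightarrow> real^'n) \<Rightarrow> (real^'n \<Rightarrow> real)
    \<Rightarrow> real^'n \<Rightarrow> real" where
  "Hess f g h x = (\<Sum>i\<in>UNIV. \<Sum>j\<in>UNIV. g x $ i * pd i (pd j h) x * f x $ j)"

text \<open>S_{f,l} h (xi, x) = L_f h + L_l h xi + 1/2 H_{l,l} h.\<close>
definition Sop :: "(real^'n::finite \<Rightarrow> real^'n) \<Rightarrow> (real^'n \<Rightarrow> real^'n) \<Rightarrow> (real^'n \<Rightarrow> real)
    \<Rightarrow> real \<Rightarrow> real^'n \<Rightarrow> real" where
  "Sop f l h \<xi> x = Lie f h x + Lie l h x * \<xi> + 1/2 * Hess l l h x"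

text \<open>Iterates S^k_{f,l} h as functions of x only; S^{k+1} h = S_{f,l}(S^k h) evaluated at
  xi = 0.  Under condition (ND) these coincide with the paper's iterates (which are
  xi-independent) for all k <= r-1.\<close>
fun Siter :: "nat \<Rightarrow> (real^'n::finite \<Rightarrow> real^'n) \<Rightarrow> (real^'n \<Rightarrow> real^'n) \<Rightarrow> (real^'n \<Rightarrow> real)
    \<Rightarrow> real^'n \<Rightarrow> real" where
  "Siter 0 f l h = h"
| "Siter (Suc k) f l h = (\<lambda>x. Sop f l (Siter k f l h) 0 x)"

text \<open>A_{l,m,g} h (xi, x) = L_g h + L_m h xi + H_{l,m} h.\<close>
definition Aop :: "(real^'n::finite \<Rightarrow> real^'n) \<Rightarrow> (real^'n \<Rightarrow> real^'n) \<Rightarrow> (real^'n \<Rightarrow> real^'n)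
    \<Rightarrow> (real^'n \<Rightarrow> real) \<Rightarrow> real \<Rightarrow> real^'n \<Rightarrow> real" where
  "Aop l m g h \<xi> x = Lie g h x + Lie m h x * \<xi> + Hess l m h x"

text \<open>Stochastic relative degree r at xbar (conditions ND, CD near xbar, RD at xbar).\<close>
definition stoch_rel_degree ::
  "(real^'n::finite \<Rightarrow> real^'n) \<Rightarrow> (real^'n \<Rightarrow> real^'n) \<Rightarrow> (real^'n \<Rightarrow> real^'n)
   \<Rightarrow> (real^'n \<Rightarrow> real^'n) \<Rightarrow> (real^'n \<Rightarrow> real) \<Rightarrow> nat \<Rightarrow> real^'n \<Rightarrow> bool" where
  "stoch_rel_degree f g l m h r xbar \<longleftrightarrow> r \<ge> 1 \<and>
     (\<exists>U. open U \<and> xbar \<in> U \<and> (\<forall>k. k + 2 \<le> r \<longrightarrow> (\<forall>x\<in>U.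
        Lie l (Siter k f l h) x = 0 \<and> Lie m (Siter k f l h) x = 0 \<and>
        Lie g (Siter k f l h) x + Hess l m (Siter k f l h) x = 0 \<and>
        Hess m m (Siter k f l h) x = 0))) \<and>
     (Lie g (Siter (r - 1) f l h) xbar + Hess l m (Siter (r - 1) f l h) xbar \<noteq> 0 \<or>
      Lie m (Siter (r - 1) f l h) xbar \<noteq> 0 \<or>
      Hess m m (Siter (r - 1) f l h) xbar \<noteq> 0)"

text \<open>Gradient (row vector dh/dx) at x.\<close>
definition grad :: "(real^'n::finite \<Rightarrow> real) \<Rightarrow> real^'n \<Rightarrow> real^'n" where
  "grad h x = (\<chi> j. pd j h x)"

text \<open>The family of row vectors (grad (\<phi> i) x), i \<in> I, is linearly independent.\<close>
definition rows_lin_indep :: "(nat \<Rightarrow> real^'n::finite \<Rightarrow> real) \<Rightarrow> nat set \<Rightarrow> real^'n \<Rightarrow> bool" where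
  "rows_lin_indep \<phi> I x \<longleftrightarrow> inj_on (\<lambda>i. grad (\<phi> i) x) I \<and> independent ((\<lambda>i. grad (\<phi> i) x) ` I)"

text \<open>Rate of change of \<phi>(x_t) along (\<Sigma>), computed by Ito's formula, in the generalised
  white-noise reading: d/dt \<phi>(x_t) = L_{f+gu} \<phi> + L_{l+mu} \<phi> \<xi>_t + 1/2 H_{l+mu,l+mu} \<phi>.\<close>
definition ito_rate ::
  "(real^'n::finite \<Rightarrow> real^'n) \<Rightarrow> (real^'n \<Rightarrow> real^'n) \<Rightarrow> (real^'n \<Rightarrow> real^'n)
   \<Rightarrow> (real^'n \<Rightarrow> real^'n) \<Rightarrow> (real^'n \<Rightarrow> real) \<Rightarrow> real \<Rightarrow> real \<Rightarrow> real^'n \<Rightarrow> real" where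
  "ito_rate f g l m \<phi> \<xi> u x =
     Lie (\<lambda>y. f y + u *\<^sub>R g y) \<phi> x + Lie (\<lambda>y. l y + u *\<^sub>R m y) \<phi> x * \<xi>
     + 1/2 * Hess (\<lambda>y. l y + u *\<^sub>R m y) (\<lambda>y. l y + u *\<^sub>R m y) \<phi> x"

end

theory Submission
  imports Defs
begin

lemma line_deriv:
  fixes h :: "real^'n::finite \<Rightarrow> real"
  assumes "(h has_derivative D) (at (x + s *\<^sub>R a))"
  shows "((\<lambda>t. h (x + t *\<^sub>R a)) has_real_derivative D a) (at s)"
proof -
  have d1: "((\<lambda>t. x + t *\<^sub>R a) has_derivative (\<lambda>t. t *\<^sub>R a)) (at s)"
    by (auto intro!: derivative_eq_intros)
  have "((h \<circ> (\<lambda>t. x + t *\<^sub>R a)) has_derivative (D \<circ> (\<lambda>t. t *\<^sub>R a))) (at s)"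
    by (rule diff_chain_at[OF d1]) (simp add: assms)
  moreover have "D \<circ> (\<lambda>t. t *\<^sub>R a) = (*) (D a)"
  proof -
    interpret bounded_linear D using has_derivative_bounded_linear[OF assms] .
    show ?thesis by (auto simp: fun_eq_iff scaleR)
  qed
  ultimately show ?thesis by (simp add: has_field_derivative_def o_def)
qed

lemma pd_eq:
  fixes h :: "real^'n::finite \<Rightarrow> real"
  assumes "(h has_derivative D) (at x)"
  shows "pd j h x = D (axis j 1)"
proof -
  have "((\<lambda>t. h (x + t *\<^sub>R axis j 1)) has_real_derivative D (axis j 1)) (at 0)"
    using line_deriv[of h D x 0 "axis j 1"] assms by simp
  then show ?thesis unfolding pd_def by (rule DERIV_imp_deriv)
qed

lemma pd_line:
  fixes h :: "real^'n::finite \<Rightarrow> real"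
  assumes "h differentiable (at (x + s *\<^sub>R axis j 1))"
  shows "((\<lambda>t. h (x + t *\<^sub>R axis j 1)) has_real_derivative pd j h (x + s *\<^sub>R axis j 1)) (at s)"
proof -
  obtain D where D: "(h has_derivative D) (at (x + s *\<^sub>R axis j 1))"
    using assms unfolding differentiable_def by blast
  show ?thesis using line_deriv[OF D] pd_eq[OF D] by simp
qed

lemma frechet_pd:
  fixes h :: "real^'n::finite \<Rightarrow> real"
  assumes "(h has_derivative D) (at x)"
  shows "D v = (\<Sum>j\<in>UNIV. pd j h x * v $ j)"
proof -
  interpret bounded_linear D using has_derivative_bounded_linear[OF assms] .
  have "D v = D (\<Sum>j\<in>UNIV. v $ j *\<^sub>R axis j 1)"
    using basis_expansion[of v] by (simp add: scalar_mult_eq_scaleR)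
  also have "\<dots> = (\<Sum>j\<in>UNIV. v $ j * D (axis j 1))"
    by (simp add: sum scaleR)
  finally show ?thesis by (simp add: pd_eq[OF assms] mult.commute)
qed

lemma has_derivative_pd:
  fixes h :: "real^'n::finite \<Rightarrow> real"
  assumes "h differentiable (at x)"
  shows "(h has_derivative (\<lambda>v. \<Sum>j\<in>UNIV. pd j h x * v $ j)) (at x)"
proof -
  obtain D where D: "(h has_derivative D) (at x)"
    using assms unfolding differentiable_def by blast
  have "D = (\<lambda>v. \<Sum>j\<in>UNIV. pd j h x * v $ j)" using frechet_pd[OF D] by auto
  with D show ?thesis by simp
qed

lemma pd_add:
  fixes a b :: "real^'n::finite \<Rightarrow> real"
  assumes "a differentiable (at x)" "b differentiable (at x)"
  shows "pd j (\<lambda>y. a y + b y) x = pd j a x + pd j b x"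
proof -
  obtain Da Db where Da: "(a has_derivative Da) (at x)" and Db: "(b has_derivative Db) (at x)"
    using assms unfolding differentiable_def by blast
  show ?thesis using pd_eq[OF has_derivative_add[OF Da Db]] pd_eq[OF Da] pd_eq[OF Db] by simp
qed

lemma pd_mult:
  fixes a b :: "real^'n::finite \<Rightarrow> real"
  assumes "a differentiable (at x)" "b differentiable (at x)"
  shows "pd j (\<lambda>y. a y * b y) x = pd j a x * b x + a x * pd j b x"
proof -
  obtain Da Db where Da: "(a has_derivative Da) (at x)" and Db: "(b has_derivative Db) (at x)"
    using assms unfolding differentiable_def by blast
  show ?thesis using pd_eq[OF has_derivative_mult[OF Da Db]] pd_eq[OF Da] pd_eq[OF Db] by simp
qed

lemma pd_const: "pd j (\<lambda>y::real^'n::finite. c) x = 0"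
proof -
  have "((\<lambda>y::real^'n. c) has_derivative (\<lambda>_. 0)) (at x)" by simp
  from pd_eq[OF this] show ?thesis by simp
qed

lemma iter_pd_append: "iter_pd (js @ ks) h = iter_pd js (iter_pd ks h)"
  by (induction js) auto

lemma smooth_pd: "smooth_fun h \<Longrightarrow> smooth_fun (pd j h)"
  unfolding smooth_fun_def using iter_pd_append[of _ "[j]" h] by (metis iter_pd.simps)

lemma smooth_diff: "smooth_fun h \<Longrightarrow> h differentiable (at x)"
  unfolding smooth_fun_def by (metis iter_pd.simps(1))

lemma smooth_pdI:
  assumes "\<And>x. h differentiable (at x)" "\<And>j. smooth_fun (pd j h)"
  shows "smooth_fun h"
  unfolding smooth_fun_def
proof (intro allI)
  fix js x show "iter_pd js h differentiable at x"
  proof (cases js rule: rev_cases)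
    case Nil then show ?thesis using assms by simp
  next
    case (snoc ys j)
    then show ?thesis using assms(2)[of j] iter_pd_append[of ys "[j]" h]
      unfolding smooth_fun_def by simp
  qed
qed

lemma iter_pd_const: "iter_pd js (\<lambda>y::real^'n::finite. c) = (\<lambda>y. if js = [] then c else 0)"
proof (induction js)
  case (Cons j js) then show ?case by (cases "js = []") (simp_all add: Cons.IH pd_const fun_eq_iff)
qed simp

lemma smooth_const: "smooth_fun (\<lambda>y::real^'n::finite. c)"
  unfolding smooth_fun_def iter_pd_const by simp

lemma iter_pd_add:
  fixes a b :: "real^'n::finite \<Rightarrow> real"
  assumes "\<And>ks x. length ks < length js \<Longrightarrow> iter_pd ks a differentiable (at x) \<and> iter_pd ks b differentiable (at x)"
  shows "iter_pd js (\<lambda>x. a x + b x) = (\<lambda>x. iter_pd js a x + iter_pd js b x)"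
  using assms
proof (induction js)
  case (Cons j js)
  have IH: "iter_pd js (\<lambda>x. a x + b x) = (\<lambda>x. iter_pd js a x + iter_pd js b x)"
    using Cons by force
  show ?case using Cons.prems[of js] by (simp add: IH pd_add fun_eq_iff)
qed simp

lemma smooth_add: "smooth_fun a \<Longrightarrow> smooth_fun b \<Longrightarrow> smooth_fun (\<lambda>x. a x + b x)"
  unfolding smooth_fun_def by (subst iter_pd_add) (auto intro!: differentiable_add)

lemma smooth_mult_aux:
  fixes h k :: "real^'n::finite \<Rightarrow> real"
  shows "length js \<le> n \<Longrightarrow> smooth_fun h \<Longrightarrow> smooth_fun k \<Longrightarrow> iter_pd js (\<lambda>x. h x * k x) differentiable (at x)"
proof (induction n arbitrary: js h k x)
  case 0 then have "js = []" by simp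
  with 0 show ?case using smooth_diff[of h x] smooth_diff[of k x] by (simp add: differentiable_mult)
next
  case (Suc n)
  show ?case
  proof (cases "length js \<le> n")
    case True then show ?thesis using Suc by blast
  next
    case False
    then obtain ys j where js: "js = ys @ [j]" and ly: "length ys = n"
      using Suc.prems(1) by (cases js rule: rev_cases) auto
    have e1: "pd j (\<lambda>x. h x * k x) = (\<lambda>x. pd j h x * k x + h x * pd j k x)"
      using Suc.prems by (auto simp: fun_eq_iff intro!: pd_mult smooth_diff)
    have e2: "iter_pd ys (\<lambda>x. pd j h x * k x + h x * pd j k x)
       = (\<lambda>x. iter_pd ys (\<lambda>x. pd j h x * k x) x + iter_pd ys (\<lambda>x. h x * pd j k x) x)"
    proof (rule iter_pd_add)
      fix ks :: "'n list" and x assume "length ks < length ys"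
      then have "length ks \<le> n" using ly by simp
      then show "iter_pd ks (\<lambda>x. pd j h x * k x) differentiable at x \<and> iter_pd ks (\<lambda>x. h x * pd j k x) differentiable at x"
        using Suc.IH[of ks "pd j h" k] Suc.IH[of ks h "pd j k"] Suc.prems smooth_pd by blast
    qed
    have d1: "iter_pd ys (\<lambda>x. pd j h x * k x) differentiable at x"
      using Suc.IH[of ys "pd j h" k] Suc.prems smooth_pd ly by blast
    have d2: "iter_pd ys (\<lambda>x. h x * pd j k x) differentiable at x"
      using Suc.IH[of ys h "pd j k"] Suc.prems smooth_pd ly by blast
    show ?thesis unfolding js iter_pd_append iter_pd.simps e1 e2
      using d1 d2 by (rule differentiable_add)
  qed
qed

lemma smooth_mult: assumes "smooth_fun a" "smooth_fun b" shows "smooth_fun (\<lambda>x. a x * b x)"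
  using smooth_mult_aux[OF order_refl assms] by (simp add: smooth_fun_def)

lemma smooth_sum: "finite A \<Longrightarrow> (\<And>i. i \<in> A \<Longrightarrow> smooth_fun (F i)) \<Longrightarrow> smooth_fun (\<lambda>x. \<Sum>i\<in>A. F i x)"
  by (induction A rule: finite_induct) (auto simp: smooth_const intro!: smooth_add)

lemma smooth_comp: "smooth_vf f \<Longrightarrow> smooth_fun (\<lambda>x. f x $ i)"
  unfolding smooth_vf_def by blast

lemma smooth_Lie: "smooth_vf f \<Longrightarrow> smooth_fun h \<Longrightarrow> smooth_fun (Lie f h)"
proof -
  assume a: "smooth_vf f" "smooth_fun h"
  have "Lie f h = (\<lambda>x. \<Sum>j\<in>UNIV. pd j h x * f x $ j)" by (simp add: fun_eq_iff Lie_def)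
  then show ?thesis using a by (auto intro!: smooth_sum smooth_mult smooth_pd smooth_comp)
qed

lemma smooth_Hess: "smooth_vf f \<Longrightarrow> smooth_vf g \<Longrightarrow> smooth_fun h \<Longrightarrow> smooth_fun (Hess f g h)"
proof -
  assume a: "smooth_vf f" "smooth_vf g" "smooth_fun h"
  have "Hess f g h = (\<lambda>x. \<Sum>i\<in>UNIV. \<Sum>j\<in>UNIV. g x $ i * pd i (pd j h) x * f x $ j)"
    by (simp add: fun_eq_iff Hess_def)
  then show ?thesis using a by (auto intro!: smooth_sum smooth_mult smooth_pd smooth_comp)
qed

lemma smooth_Siter:
  assumes "smooth_vf f" "smooth_vf l" "smooth_fun h"
  shows "smooth_fun (Siter k f l h)"
proof (induction k)
  case 0 then show ?case using assms by simp
next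
  case (Suc k)
  have "Siter (Suc k) f l h = (\<lambda>x. Lie f (Siter k f l h) x + (\<lambda>x. 1/2) x * Hess l l (Siter k f l h) x)"
    by (simp add: fun_eq_iff Sop_def)
  then show ?case using Suc assms
    by (simp only:) (intro smooth_add smooth_mult smooth_Lie smooth_Hess smooth_const; assumption)
qed

lemma smooth_inner: "smooth_fun (\<lambda>x::real^'n::finite. v \<bullet> x)"
proof (rule smooth_pdI)
  have D: "((\<lambda>x. v \<bullet> x) has_derivative (\<lambda>x. v \<bullet> x)) (at y)" for y
    by (auto intro!: derivative_eq_intros)
  show "(\<lambda>x. v \<bullet> x) differentiable at x" for x using D differentiable_def by blast
  have "pd j (\<lambda>x. v \<bullet> x) = (\<lambda>x. v $ j)" for j
    using pd_eq[OF D] by (simp add: fun_eq_iff inner_axis)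
  then show "smooth_fun (pd j (\<lambda>x. v \<bullet> x))" for j by (simp add: smooth_const)
qed

lemma grad_inner: "grad (\<lambda>x::real^'n::finite. v \<bullet> x) y = v"
proof -
  have D: "((\<lambda>x. v \<bullet> x) has_derivative (\<lambda>x. v \<bullet> x)) (at y)"
    by (auto intro!: derivative_eq_intros)
  show ?thesis unfolding grad_def using pd_eq[OF D] by (simp add: vec_eq_iff inner_axis)
qed

lemma mixed_mvt:
  fixes h :: "real^'n::finite \<Rightarrow> real"
  assumes dh: "\<And>y. h differentiable (at y)" and dhi: "\<And>y. pd i h differentiable (at y)" and s: "s > 0"
  shows "\<exists>\<sigma> \<tau>. 0 < \<sigma> \<and> \<sigma> < s \<and> 0 < \<tau> \<and> \<tau> < s \<and>
    h (x + s *\<^sub>R axis i 1 + s *\<^sub>R axis j 1) - h (x + s *\<^sub>R axis j 1) - h (x + s *\<^sub>R axis i 1) + h x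
      = s * s * pd j (pd i h) (x + \<sigma> *\<^sub>R axis i 1 + \<tau> *\<^sub>R axis j 1)"
proof -
  define e :: "real^'n" where "e = axis i 1"
  define d :: "real^'n" where "d = axis j 1"
  define g where "g = (\<lambda>\<sigma>. h (x + s *\<^sub>R d + \<sigma> *\<^sub>R e) - h (x + \<sigma> *\<^sub>R e))"
  define G' where "G' = (\<lambda>t. pd i h (x + s *\<^sub>R d + t *\<^sub>R e) - pd i h (x + t *\<^sub>R e))"
  have Dg: "(g has_real_derivative G' t) (at t)" for t
    unfolding g_def e_def G'_def by (intro DERIV_diff pd_line dh)
  obtain \<sigma> where \<sigma>: "0 < \<sigma>" "\<sigma> < s"
    "g s - g 0 = (s - 0) * (pd i h (x + s *\<^sub>R d + \<sigma> *\<^sub>R e) - pd i h (x + \<sigma> *\<^sub>R e))"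
    using MVT2[of 0 s g G', OF s Dg] unfolding G'_def by blast
  define k where "k = (\<lambda>\<tau>. pd i h (x + \<sigma> *\<^sub>R e + \<tau> *\<^sub>R d))"
  define K' where "K' = (\<lambda>t. pd j (pd i h) (x + \<sigma> *\<^sub>R e + t *\<^sub>R d))"
  have Dk: "(k has_real_derivative K' t) (at t)" for t
    unfolding k_def d_def K'_def by (intro pd_line dhi)
  obtain \<tau> where \<tau>: "0 < \<tau>" "\<tau> < s"
    "k s - k 0 = (s - 0) * pd j (pd i h) (x + \<sigma> *\<^sub>R e + \<tau> *\<^sub>R d)"
    using MVT2[of 0 s k K', OF s Dk] unfolding K'_def by blast
  have p1: "x + s *\<^sub>R d + \<sigma> *\<^sub>R e = x + \<sigma> *\<^sub>R e + s *\<^sub>R d" by (simp add: algebra_simps)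
  have p2: "x + s *\<^sub>R d + s *\<^sub>R e = x + s *\<^sub>R e + s *\<^sub>R d" by (simp add: algebra_simps)
  have "h (x + s *\<^sub>R e + s *\<^sub>R d) - h (x + s *\<^sub>R d) - h (x + s *\<^sub>R e) + h x = g s - g 0"
    unfolding g_def p2 by simp
  also have "\<dots> = s * (k s - k 0)" using \<sigma>(3) unfolding k_def p1 by simp
  also have "\<dots> = s * s * pd j (pd i h) (x + \<sigma> *\<^sub>R e + \<tau> *\<^sub>R d)" using \<tau>(3) by simp
  finally show ?thesis using \<sigma> \<tau> unfolding e_def d_def by blast
qed

lemma clairaut:
  fixes h :: "real^'n::finite \<Rightarrow> real"
  assumes sm: "smooth_fun h"
  shows "pd j (pd i h) x = pd i (pd j h) x"
proof (rule ccontr)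
  let ?A = "pd j (pd i h)" and ?B = "pd i (pd j h)"
  assume ne: "?A x \<noteq> ?B x"
  define \<epsilon> where "\<epsilon> = \<bar>?A x - ?B x\<bar> / 2"
  have \<epsilon>: "\<epsilon> > 0" using ne unfolding \<epsilon>_def by simp
  have cA: "isCont ?A x" and cB: "isCont ?B x"
    using smooth_diff[OF smooth_pd[OF smooth_pd[OF sm]]] by (auto intro: differentiable_imp_continuous_within)
  obtain d1 where d1: "d1 > 0" "\<And>y. dist y x < d1 \<Longrightarrow> dist (?A y) (?A x) < \<epsilon>"
    using cA \<epsilon> unfolding continuous_at_eps_delta by blast
  obtain d2 where d2: "d2 > 0" "\<And>y. dist y x < d2 \<Longrightarrow> dist (?B y) (?B x) < \<epsilon>"
    using cB \<epsilon> unfolding continuous_at_eps_delta by blast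
  define s where "s = min d1 d2 / 4"
  have s: "s > 0" using d1 d2 unfolding s_def by simp
  have dh: "\<And>y. h differentiable (at y)" and dhi: "\<And>y. pd i h differentiable (at y)"
    and dhj: "\<And>y. pd j h differentiable (at y)"
    using sm by (auto intro: smooth_diff smooth_pd)
  obtain \<sigma> \<tau> where st: "0 < \<sigma>" "\<sigma> < s" "0 < \<tau>" "\<tau> < s" and
    E1: "h (x + s *\<^sub>R axis i 1 + s *\<^sub>R axis j 1) - h (x + s *\<^sub>R axis j 1) - h (x + s *\<^sub>R axis i 1) + h x
      = s * s * ?A (x + \<sigma> *\<^sub>R axis i 1 + \<tau> *\<^sub>R axis j 1)"
    using mixed_mvt[OF dh dhi s, of x j] by blast
  obtain \<sigma>' \<tau>' where st': "0 < \<sigma>'" "\<sigma>' < s" "0 < \<tau>'" "\<tau>' < s" and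
    E2: "h (x + s *\<^sub>R axis j 1 + s *\<^sub>R axis i 1) - h (x + s *\<^sub>R axis i 1) - h (x + s *\<^sub>R axis j 1) + h x
      = s * s * ?B (x + \<sigma>' *\<^sub>R axis j 1 + \<tau>' *\<^sub>R axis i 1)"
    using mixed_mvt[OF dh dhj s, of x i] by blast
  have pp: "x + s *\<^sub>R axis j 1 + s *\<^sub>R axis i 1 = x + s *\<^sub>R axis i 1 + s *\<^sub>R axis j 1"
    by (simp add: algebra_simps)
  have "s * s * ?A (x + \<sigma> *\<^sub>R axis i 1 + \<tau> *\<^sub>R axis j 1) = s * s * ?B (x + \<sigma>' *\<^sub>R axis j 1 + \<tau>' *\<^sub>R axis i 1)"
    using E1 E2 unfolding pp by argo
  then have eqAB: "?A (x + \<sigma> *\<^sub>R axis i 1 + \<tau> *\<^sub>R axis j 1) = ?B (x + \<sigma>' *\<^sub>R axis j 1 + \<tau>' *\<^sub>R axis i 1)"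
    using s by simp
  have nrm: "dist (x + a *\<^sub>R axis p 1 + b *\<^sub>R axis q 1) x < min d1 d2"
    if "0 < a" "a < s" "0 < b" "b < s" for a b and p q :: 'n
  proof -
    have "dist (x + a *\<^sub>R axis p 1 + b *\<^sub>R axis q 1) x = norm (a *\<^sub>R axis p 1 + b *\<^sub>R axis q (1::real))"
      by (simp add: dist_norm)
    also have "\<dots> \<le> norm (a *\<^sub>R axis p (1::real)) + norm (b *\<^sub>R axis q (1::real))" by (rule norm_triangle_ineq)
    also have "\<dots> = a + b" using that by simp
    also have "\<dots> < min d1 d2" using that s_def d1 d2 by simp
    finally show ?thesis .
  qed
  have "dist (?A (x + \<sigma> *\<^sub>R axis i 1 + \<tau> *\<^sub>R axis j 1)) (?A x) < \<epsilon>"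
    using d1(2) nrm[OF st] by simp
  moreover have "dist (?B (x + \<sigma>' *\<^sub>R axis j 1 + \<tau>' *\<^sub>R axis i 1)) (?B x) < \<epsilon>"
    using d2(2) nrm[OF st'] by simp
  ultimately have "\<bar>?A x - ?B x\<bar> < 2 * \<epsilon>" using eqAB by (simp add: dist_real_def)
  then show False unfolding \<epsilon>_def by simp
qed

lemma Hess_sym:
  assumes sm: "smooth_fun h"
  shows "Hess a b h x = Hess b a h x"
proof -
  have "Hess b a h x = (\<Sum>j\<in>UNIV. \<Sum>i\<in>UNIV. a x $ i * pd i (pd j h) x * b x $ j)"
    unfolding Hess_def by (rule sum.swap)
  also have "\<dots> = (\<Sum>j\<in>UNIV. \<Sum>i\<in>UNIV. b x $ j * pd j (pd i h) x * a x $ i)"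
    by (intro sum.cong refl) (simp add: clairaut[OF sm] mult.commute mult.left_commute)
  finally show ?thesis unfolding Hess_def by simp
qed

lemma Lie_add: "Lie (\<lambda>y. f y + u *\<^sub>R g y) h x = Lie f h x + u * Lie g h x"
  unfolding Lie_def by (simp add: algebra_simps sum.distrib sum_distrib_left)

lemma Hess_expand:
  "Hess (\<lambda>y. l y + u *\<^sub>R m y) (\<lambda>y. l y + u *\<^sub>R m y) h x
    = Hess l l h x + u * Hess l m h x + u * Hess m l h x + u^2 * Hess m m h x"
proof -
  have "Hess (\<lambda>y. l y + u *\<^sub>R m y) (\<lambda>y. l y + u *\<^sub>R m y) h x
     = (\<Sum>i\<in>UNIV. \<Sum>j\<in>UNIV. l x $ i * pd i (pd j h) x * l x $ j
         + u * (m x $ i * pd i (pd j h) x * l x $ j) + u * (l x $ i * pd i (pd j h) x * m x $ j)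
         + u^2 * (m x $ i * pd i (pd j h) x * m x $ j))"
    unfolding Hess_def by (intro sum.cong refl) (simp add: algebra_simps power2_eq_square)
  then show ?thesis by (simp add: Hess_def sum.distrib sum_distrib_left)
qed

lemma ito_expand:
  assumes "smooth_fun \<phi>"
  shows "ito_rate f g l m \<phi> \<xi> u x = Sop f l \<phi> \<xi> x + Aop l m g \<phi> \<xi> x * u + 1/2 * Hess m m \<phi> x * u\<^sup>2"
  unfolding ito_rate_def Lie_add Hess_expand Sop_def Aop_def Hess_sym[OF assms, of m l]
  by (simp add: algebra_simps)

lemma vec_lambda_sum: "(\<chi> k. c k) = (\<Sum>k\<in>UNIV. c k *\<^sub>R axis k (1::real))"
  by (simp add: vec_eq_iff sum_component axis_def if_distrib cong: if_cong)

lemma local_inj: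
  fixes F :: "'n::finite \<Rightarrow> real^'n \<Rightarrow> real"
  assumes sm: "\<And>k. smooth_fun (F k)"
    and sp: "span (range (\<lambda>k. grad (F k) a)) = UNIV"
  shows "\<exists>\<rho>>0. inj_on (\<lambda>x. \<chi> k. F k x) (ball a \<rho>)"
proof -
  define f' where "f' = (\<lambda>x v. \<chi> k. \<Sum>j\<in>UNIV. pd j (F k) x * v $ j)"
  have derf: "((\<lambda>x. \<chi> k. F k x) has_derivative f' x) (at x)" for x
  proof -
    have "((\<lambda>x. \<Sum>k\<in>UNIV. F k x *\<^sub>R axis k (1::real)) has_derivative
        (\<lambda>v. \<Sum>k\<in>UNIV. (\<Sum>j\<in>UNIV. pd j (F k) x * v $ j) *\<^sub>R axis k 1)) (at x)"
      by (intro has_derivative_sum has_derivative_scaleR_left has_derivative_pd smooth_diff sm)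
    then show ?thesis unfolding f'_def vec_lambda_sum[of "\<lambda>k. F k _"]
      by (subst vec_lambda_sum) simp
  qed
  have lin: "linear (f' a)" using derf[of a] by (rule has_derivative_linear)
  have zero: "z = 0" if "f' a z = 0" for z
  proof -
    have "grad (F k) a \<bullet> z = 0" for k
    proof -
      have "(f' a z) $ k = 0" using that by simp
      then show ?thesis unfolding f'_def grad_def inner_vec_def by simp
    qed
    then have "orthogonal z z"
      by (intro orthogonal_to_span[of z "range (\<lambda>k. grad (F k) a)"])
         (auto simp: sp orthogonal_def inner_commute)
    then show "z = 0" by (simp add: orthogonal_def)
  qed
  have "inj (f' a)"
  proof (rule injI)
    fix v w assume "f' a v = f' a w"
    then have "f' a (v - w) = 0" using linear_diff[OF lin] by simp
    then show "v = w" using zero[of "v - w"] by simp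
  qed
  then obtain g' where g': "linear g'" "g' \<circ> f' a = id"
    using linear_injective_left_inverse[OF lin] by blast
  have bl: "bounded_linear g'" using g'(1) linear_conv_bounded_linear by blast
  define S where "S = (\<lambda>x. \<Sum>k\<in>UNIV. \<Sum>j\<in>UNIV. \<bar>pd j (F k) x - pd j (F k) a\<bar>)"
  have cS: "isCont S a"
  proof -
    have "isCont (pd j (F k)) a" for j k
      using smooth_diff[OF smooth_pd[OF sm]] by (auto intro: differentiable_imp_continuous_within)
    then show ?thesis unfolding S_def by (intro continuous_intros) auto
  qed
  have S0: "S a = 0" by (simp add: S_def)
  have bound: "onorm (\<lambda>v. f' x v - f' a v) \<le> S x" for x
  proof (rule onorm_le)
    fix v :: "real^'n"
    have "norm (f' x v - f' a v) \<le> (\<Sum>k\<in>UNIV. \<bar>(f' x v - f' a v) $ k\<bar>)" by (rule norm_le_l1_cart)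
    also have "\<dots> = (\<Sum>k\<in>UNIV. \<bar>\<Sum>j\<in>UNIV. (pd j (F k) x - pd j (F k) a) * v $ j\<bar>)"
      unfolding f'_def by (simp add: sum_subtractf left_diff_distrib)
    also have "\<dots> \<le> (\<Sum>k\<in>UNIV. \<Sum>j\<in>UNIV. \<bar>pd j (F k) x - pd j (F k) a\<bar> * norm v)"
    proof (intro sum_mono)
      fix k
      have "\<bar>\<Sum>j\<in>UNIV. (pd j (F k) x - pd j (F k) a) * v $ j\<bar> \<le> (\<Sum>j\<in>UNIV. \<bar>(pd j (F k) x - pd j (F k) a) * v $ j\<bar>)"
        by (rule sum_abs)
      also have "\<dots> \<le> (\<Sum>j\<in>UNIV. \<bar>pd j (F k) x - pd j (F k) a\<bar> * norm v)"
        by (intro sum_mono) (simp add: abs_mult mult_left_mono component_le_norm_cart)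
      finally show "\<bar>\<Sum>j\<in>UNIV. (pd j (F k) x - pd j (F k) a) * v $ j\<bar> \<le> (\<Sum>j\<in>UNIV. \<bar>pd j (F k) x - pd j (F k) a\<bar> * norm v)" .
    qed
    also have "\<dots> = S x * norm v" by (simp add: S_def sum_distrib_right)
    finally show "norm (f' x v - f' a v) \<le> S x * norm v" .
  qed
  have cond: "\<exists>d>0. \<forall>x. dist a x < d \<longrightarrow> onorm (\<lambda>v. f' x v - f' a v) < e" if e: "e > 0" for e
  proof -
    obtain d where d: "d > 0" "\<And>y. dist y a < d \<Longrightarrow> dist (S y) (S a) < e"
      using cS e unfolding continuous_at_eps_delta by blast
    have "onorm (\<lambda>v. f' x v - f' a v) < e" if "dist a x < d" for x
    proof -
      have "dist (S x) (S a) < e" using d(2)[of x] that by (simp add: dist_commute)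
      then have "S x < e" using S0 by (simp add: dist_real_def)
      then show ?thesis using bound[of x] by linarith
    qed
    then show ?thesis using d(1) by blast
  qed
  obtain \<rho> where "\<rho> > 0" "ball a \<rho> \<subseteq> UNIV" "inj_on (\<lambda>x. \<chi> k. F k x) (ball a \<rho>)"
    using has_derivative_locally_injective[of a UNIV g' f' "\<lambda>x. \<chi> k. F k x", OF _ _ bl g'(2) derf cond]
    by auto
  then show ?thesis by blast
qed

lemma affine_SA: "\<exists>\<alpha>1 \<beta>1 \<alpha>2 \<beta>2. \<forall>\<xi>. Sop f l \<psi> \<xi> y = \<alpha>1 + \<beta>1 * \<xi> \<and> Aop l m g \<psi> \<xi> y = \<alpha>2 + \<beta>2 * \<xi>"
  by (rule exI[of _ "Lie f \<psi> y + 1/2 * Hess l l \<psi> y"], rule exI[of _ "Lie l \<psi> y"],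
      rule exI[of _ "Lie g \<psi> y + Hess l m \<psi> y"], rule exI[of _ "Lie m \<psi> y"])
     (simp add: Sop_def Aop_def algebra_simps)

theorem proposition2:
  fixes f g l m :: "real^'n::finite \<Rightarrow> real^'n"
    and h :: "real^'n \<Rightarrow> real" and xbar :: "real^'n" and r :: nat
  assumes smooth: "smooth_vf f" "smooth_vf g" "smooth_vf l" "smooth_vf m" "smooth_fun h"
    and reldeg: "stoch_rel_degree f g l m h r xbar"
    and indep: "rows_lin_indep (\<lambda>k. Siter k f l h) {0..<r} xbar"
    and rn: "r < CARD('n)"
  shows "\<exists>\<phi> :: nat \<Rightarrow> real^'n \<Rightarrow> real.
    (\<forall>i\<in>{1..r}. \<phi> i = Siter (i - 1) f l h) \<and>
    (\<forall>j\<in>{1..CARD('n)}. smooth_fun (\<phi> j)) \<and>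
    rows_lin_indep \<phi> {1..CARD('n)} xbar \<and>
    (let \<Phi> = (\<lambda>x. \<lambda>i::nat. if i \<in> {1..CARD('n)} then \<phi> i x else 0) in
     \<exists>U. open U \<and> xbar \<in> U \<and> inj_on \<Phi> U \<and>
       homeomorphism U (\<Phi> ` U) \<Phi> (the_inv_into U \<Phi>) \<and>
       (let \<Phi>inv = the_inv_into U \<Phi>;
            c = (\<lambda>\<xi> z. Sop f l (Siter (r - 1) f l h) \<xi> (\<Phi>inv z));
            b = (\<lambda>\<xi> z. Aop l m g (Siter (r - 1) f l h) \<xi> (\<Phi>inv z));
            a = (\<lambda>z. 1/2 * Hess m m (Siter (r - 1) f l h) (\<Phi>inv z));
            p = (\<lambda>j \<xi> z. Sop f l (\<phi> j) \<xi> (\<Phi>inv z));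
            q = (\<lambda>j \<xi> z. Aop l m g (\<phi> j) \<xi> (\<Phi>inv z));
            s = (\<lambda>j z. 1/2 * Hess m m (\<phi> j) (\<Phi>inv z))
        in (\<forall>x\<in>U. \<forall>\<xi> u.
              (\<forall>i\<in>{1..<r}. ito_rate f g l m (\<phi> i) \<xi> u x = \<Phi> x (i + 1)) \<and>
              ito_rate f g l m (\<phi> r) \<xi> u x
                = c \<xi> (\<Phi> x) + b \<xi> (\<Phi> x) * u + a (\<Phi> x) * u\<^sup>2 \<and>
              (\<forall>j\<in>{r+1..CARD('n)}. ito_rate f g l m (\<phi> j) \<xi> u x
                = p j \<xi> (\<Phi> x) + q j \<xi> (\<Phi> x) * u + s j (\<Phi> x) * u\<^sup>2) \<and>
              h x = \<Phi> x 1) \<and>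
           (\<forall>z\<in>\<Phi> ` U. \<exists>\<alpha>1 \<beta>1 \<alpha>2 \<beta>2. \<forall>\<xi>.
              c \<xi> z = \<alpha>1 + \<beta>1 * \<xi> \<and> b \<xi> z = \<alpha>2 + \<beta>2 * \<xi>) \<and>
           (\<forall>j\<in>{r+1..CARD('n)}. \<forall>z\<in>\<Phi> ` U. \<exists>\<alpha>1 \<beta>1 \<alpha>2 \<beta>2. \<forall>\<xi>.
              p j \<xi> z = \<alpha>1 + \<beta>1 * \<xi> \<and> q j \<xi> z = \<alpha>2 + \<beta>2 * \<xi>)))"
proof -
  let ?n = "CARD('n)"
  have r1: "r \<ge> 1" using reldeg unfolding stoch_rel_degree_def by blast
  obtain U0 where U0: "open U0" "xbar \<in> U0" and
    cnd: "\<forall>k. k + 2 \<le> r \<longrightarrow> (\<forall>x\<in>U0.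
        Lie l (Siter k f l h) x = 0 \<and> Lie m (Siter k f l h) x = 0 \<and>
        Lie g (Siter k f l h) x + Hess l m (Siter k f l h) x = 0 \<and>
        Hess m m (Siter k f l h) x = 0)"
    using reldeg unfolding stoch_rel_degree_def by blast
  define gr where "gr = (\<lambda>k. grad (Siter k f l h) xbar)"
  have injS: "inj_on gr {0..<r}" and indS: "independent (gr ` {0..<r})"
    using indep unfolding rows_lin_indep_def gr_def by auto
  define S where "S = gr ` {0..<r}"
  have indS': "independent S" unfolding S_def by (rule indS)
  obtain B where B: "S \<subseteq> B" "independent B" "UNIV \<subseteq> span B"
    by (rule maximal_independent_subset_extend[OF subset_UNIV indS'])
  have finB: "finite B" by (rule conjunct1[OF independent_bound[OF B(2)]])
  have "card B = dim (UNIV :: (real^'n) set)" by (rule basis_card_eq_dim[OF subset_UNIV B(3) B(2)])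
  then have cardB: "card B = ?n" by simp
  have cardS: "card S = r" unfolding S_def using card_image[OF injS] by simp
  have finS: "finite S" unfolding S_def by simp
  define E where "E = B - S"
  have cardE: "card E = ?n - r" unfolding E_def using card_Diff_subset[OF finS B(1)] cardB cardS by simp
  have finE: "finite E" unfolding E_def using finB by simp
  obtain e where e: "bij_betw e {r+1..?n} E"
    using finite_same_card_bij[of "{r+1..?n}" E] finE cardE by auto
  define \<phi> where "\<phi> = (\<lambda>i. if i \<le> r then Siter (i - 1) f l h else (\<lambda>x. e i \<bullet> x))"
  have \<phi>1: "\<forall>i\<in>{1..r}. \<phi> i = Siter (i - 1) f l h" by (simp add: \<phi>_def)
  have sm\<phi>: "smooth_fun (\<phi> j)" for j
    using smooth_Siter[OF smooth(1,3,5)] smooth_inner[of "e j"] by (cases "j \<le> r") (simp_all add: \<phi>_def)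
  have gr\<phi>: "grad (\<phi> i) xbar = (if i \<le> r then gr (i - 1) else e i)" for i
    by (simp add: \<phi>_def gr_def grad_inner)
  define Gr where "Gr = (\<lambda>i. grad (\<phi> i) xbar)"
  have img: "Gr ` {1..?n} \<subseteq> B"
  proof
    fix v assume "v \<in> Gr ` {1..?n}"
    then obtain i where i: "i \<in> {1..?n}" "v = Gr i" by blast
    show "v \<in> B"
    proof (cases "i \<le> r")
      case True
      then have "gr (i - 1) \<in> S" unfolding S_def using i by auto
      then show ?thesis using B(1) i True by (auto simp: Gr_def gr\<phi>)
    next
      case False
      then have "e i \<in> E" using e i unfolding bij_betw_def by auto
      then show ?thesis using i False by (auto simp: Gr_def gr\<phi> E_def)
    qed
  qed
  have inj\<phi>: "inj_on Gr {1..?n}"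
  proof (rule inj_onI)
    fix i i' assume i: "i \<in> {1..?n}" and i': "i' \<in> {1..?n}" and eq: "Gr i = Gr i'"
    have inS: "gr (k - 1) \<in> S" if "1 \<le> k" "k \<le> r" for k unfolding S_def using that by auto
    have inE: "e k \<in> E" if "r < k" "k \<le> ?n" for k using e that unfolding bij_betw_def by auto
    show "i = i'"
    proof (cases "i \<le> r"; cases "i' \<le> r")
      assume a: "i \<le> r" "i' \<le> r"
      then have "gr (i - 1) = gr (i' - 1)" using eq by (simp add: Gr_def gr\<phi>)
      then have "i - 1 = i' - 1" using injS a i i' unfolding inj_on_def by auto
      then show ?thesis using i i' by auto
    next
      assume a: "i \<le> r" "\<not> i' \<le> r"
      then have "gr (i - 1) = e i'" using eq by (simp add: Gr_def gr\<phi>)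
      then show ?thesis using inS[of i] inE[of i'] a i i' E_def by auto
    next
      assume a: "\<not> i \<le> r" "i' \<le> r"
      then have "e i = gr (i' - 1)" using eq by (simp add: Gr_def gr\<phi>)
      then show ?thesis using inS[of i'] inE[of i] a i i' E_def by auto
    next
      assume a: "\<not> i \<le> r" "\<not> i' \<le> r"
      then have "e i = e i'" using eq by (simp add: Gr_def gr\<phi>)
      then show ?thesis using e a i i' unfolding bij_betw_def inj_on_def by auto
    qed
  qed
  have ind\<phi>: "independent (Gr ` {1..?n})" by (rule independent_mono[OF B(2) img])
  have rows: "rows_lin_indep \<phi> {1..?n} xbar"
    unfolding rows_lin_indep_def using inj\<phi> ind\<phi> by (simp add: Gr_def)
  have cardimg: "card (Gr ` {1..?n}) = ?n" using card_image[OF inj\<phi>] by simp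
  have spanimg: "span (Gr ` {1..?n}) = UNIV"
    using card_eq_dim[of "Gr ` {1..?n}" UNIV] cardimg ind\<phi> by auto
  obtain idx :: "'n \<Rightarrow> nat" where idx: "bij_betw idx UNIV {1..?n}"
    using finite_same_card_bij[of "UNIV :: 'n set" "{1..?n}"] by auto
  have idx_in: "idx k \<in> {1..?n}" for k using idx unfolding bij_betw_def by auto
  define F where "F = (\<lambda>k. \<phi> (idx k))"
  have rngF: "range (\<lambda>k. grad (F k) xbar) = Gr ` {1..?n}"
  proof -
    have "Gr ` range idx = range (\<lambda>k. Gr (idx k))" by (rule image_image)
    moreover have "range idx = {1..?n}" using idx by (simp add: bij_betw_def)
    ultimately show ?thesis by (simp add: F_def Gr_def)
  qed
  obtain \<rho> where \<rho>: "\<rho> > 0" "inj_on (\<lambda>x. \<chi> k. F k x) (ball xbar \<rho>)"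
    using local_inj[of F xbar] sm\<phi> rngF spanimg unfolding F_def by auto
  define G where "G = (\<lambda>x. \<chi> k. F k x)"
  define U where "U = ball xbar \<rho> \<inter> U0"
  have oU: "open U" and xU: "xbar \<in> U" using U0 \<rho> by (auto simp: U_def)
  define \<Phi> where "\<Phi> = (\<lambda>x. \<lambda>i::nat. if i \<in> {1..?n} then \<phi> i x else 0)"
  have G\<Phi>: "G x = (\<chi> k. \<Phi> x (idx k))" for x
    using idx_in by (simp add: G_def \<Phi>_def F_def)
  have injG: "inj_on G U" using \<rho>(2) unfolding G_def U_def inj_on_def by blast
  have inj\<Phi>: "inj_on \<Phi> U"
  proof (rule inj_onI)
    fix x y assume "x \<in> U" "y \<in> U" "\<Phi> x = \<Phi> y"
    then show "x = y" using injG G\<Phi>[of x] G\<Phi>[of y] unfolding inj_on_def by metis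
  qed
  have cont\<phi>: "continuous_on A (\<phi> i)" for A i
    by (intro continuous_at_imp_continuous_on ballI differentiable_imp_continuous_within smooth_diff sm\<phi>)
  have contG: "continuous_on U G"
    unfolding G_def F_def by (intro continuous_on_vec_lambda cont\<phi>)
  obtain ginv where ginv: "homeomorphism U (G ` U) G ginv"
    using invariance_of_domain_homeomorphism[OF oU contG _ injG] by auto
  have cont\<Phi>: "continuous_on U \<Phi>"
  proof (rule continuous_on_coordinatewise_then_product)
    fix i show "continuous_on U (\<lambda>x. \<Phi> x i)"
      by (cases "i \<in> {1..?n}") (simp_all add: \<Phi>_def cont\<phi> del: atLeastAtMost_iff)
  qed
  have continv: "continuous_on (\<Phi> ` U) (the_inv_into U \<Phi>)"
  proof -
    have cP: "continuous_on (\<Phi> ` U) (\<lambda>z. \<chi> k. z (idx k))"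
      by (intro continuous_on_vec_lambda continuous_on_subset[OF continuous_on_product_coordinates]) auto
    have sub: "(\<lambda>z. \<chi> k. z (idx k)) ` (\<Phi> ` U) \<subseteq> G ` U" using G\<Phi> by auto
    have "continuous_on (\<Phi> ` U) (\<lambda>z. ginv (\<chi> k. z (idx k)))"
      by (rule continuous_on_compose2[OF _ cP sub]) (use ginv in \<open>simp add: homeomorphism_def\<close>)
    moreover have "ginv (\<chi> k. z (idx k)) = the_inv_into U \<Phi> z" if z: "z \<in> \<Phi> ` U" for z
    proof -
      obtain x where x: "x \<in> U" "z = \<Phi> x" using z by blast
      then show ?thesis using ginv the_inv_into_f_f[OF inj\<Phi> x(1)] G\<Phi>[of x]
        unfolding homeomorphism_def by auto
    qed
    ultimately show ?thesis using continuous_on_eq by blast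
  qed
  have hom: "homeomorphism U (\<Phi> ` U) \<Phi> (the_inv_into U \<Phi>)"
    unfolding homeomorphism_def using cont\<Phi> continv inj\<Phi>
    by (auto simp: the_inv_into_f_f f_the_inv_into_f image_iff)
  have Fi: "the_inv_into U \<Phi> (\<Phi> x) = x" if "x \<in> U" for x using the_inv_into_f_f[OF inj\<Phi> that] .
  have rn': "r \<le> ?n" using rn by simp
  have F2: "ito_rate f g l m (\<phi> i) \<xi> u x = \<Phi> x (i + 1)" if "x \<in> U" "i \<in> {1..<r}" for x i \<xi> u
  proof -
    let ?\<psi> = "Siter (i - 1) f l h"
    have xU0: "x \<in> U0" using that U_def by simp
    have c: "Lie l ?\<psi> x = 0" "Lie m ?\<psi> x = 0" "Lie g ?\<psi> x + Hess l m ?\<psi> x = 0" "Hess m m ?\<psi> x = 0"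
      using cnd xU0 that(2) by (auto dest!: spec[of _ "i - 1"])
    have "\<Phi> x (i + 1) = Siter (Suc (i - 1)) f l h x" using that(2) rn' by (simp add: \<Phi>_def \<phi>_def)
    also have "\<dots> = Sop f l ?\<psi> 0 x" by simp
    finally have e1: "\<Phi> x (i + 1) = Sop f l ?\<psi> 0 x" .
    have "\<phi> i = ?\<psi>" using that(2) by (simp add: \<phi>_def)
    then show ?thesis unfolding e1 using ito_expand[OF sm\<phi>[of i], of f g l m \<xi> u x] c
      by (simp add: Sop_def Aop_def)
  qed
  have \<phi>r: "\<phi> r = Siter (r - 1) f l h" by (simp add: \<phi>_def)
  have F5: "h x = \<Phi> x 1" for x using r1 rn by (simp add: \<Phi>_def \<phi>_def)
  show ?thesis
  proof (intro exI[of _ \<phi>] conjI)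
    show "\<forall>i\<in>{1..r}. \<phi> i = Siter (i - 1) f l h" by (rule \<phi>1)
    show "\<forall>j\<in>{1..?n}. smooth_fun (\<phi> j)" using sm\<phi> by blast
    show "rows_lin_indep \<phi> {1..?n} xbar" by (rule rows)
    show "let \<Phi> = (\<lambda>x. \<lambda>i::nat. if i \<in> {1..CARD('n)} then \<phi> i x else 0) in
     \<exists>U. open U \<and> xbar \<in> U \<and> inj_on \<Phi> U \<and>
       homeomorphism U (\<Phi> ` U) \<Phi> (the_inv_into U \<Phi>) \<and>
       (let \<Phi>inv = the_inv_into U \<Phi>;
            c = (\<lambda>\<xi> z. Sop f l (Siter (r - 1) f l h) \<xi> (\<Phi>inv z));
            b = (\<lambda>\<xi> z. Aop l m g (Siter (r - 1) f l h) \<xi> (\<Phi>inv z));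
            a = (\<lambda>z. 1/2 * Hess m m (Siter (r - 1) f l h) (\<Phi>inv z));
            p = (\<lambda>j \<xi> z. Sop f l (\<phi> j) \<xi> (\<Phi>inv z));
            q = (\<lambda>j \<xi> z. Aop l m g (\<phi> j) \<xi> (\<Phi>inv z));
            s = (\<lambda>j z. 1/2 * Hess m m (\<phi> j) (\<Phi>inv z))
        in (\<forall>x\<in>U. \<forall>\<xi> u.
              (\<forall>i\<in>{1..<r}. ito_rate f g l m (\<phi> i) \<xi> u x = \<Phi> x (i + 1)) \<and>
              ito_rate f g l m (\<phi> r) \<xi> u x
                = c \<xi> (\<Phi> x) + b \<xi> (\<Phi> x) * u + a (\<Phi> x) * u\<^sup>2 \<and>
              (\<forall>j\<in>{r+1..CARD('n)}. ito_rate f g l m (\<phi> j) \<xi> u x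
                = p j \<xi> (\<Phi> x) + q j \<xi> (\<Phi> x) * u + s j (\<Phi> x) * u\<^sup>2) \<and>
              h x = \<Phi> x 1) \<and>
           (\<forall>z\<in>\<Phi> ` U. \<exists>\<alpha>1 \<beta>1 \<alpha>2 \<beta>2. \<forall>\<xi>.
              c \<xi> z = \<alpha>1 + \<beta>1 * \<xi> \<and> b \<xi> z = \<alpha>2 + \<beta>2 * \<xi>) \<and>
           (\<forall>j\<in>{r+1..CARD('n)}. \<forall>z\<in>\<Phi> ` U. \<exists>\<alpha>1 \<beta>1 \<alpha>2 \<beta>2. \<forall>\<xi>.
              p j \<xi> z = \<alpha>1 + \<beta>1 * \<xi> \<and> q j \<xi> z = \<alpha>2 + \<beta>2 * \<xi>))"
      unfolding \<Phi>_def[symmetric] Let_def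
    proof (intro exI[of _ U] conjI ballI allI)
      show "open U" "xbar \<in> U" "inj_on \<Phi> U" "homeomorphism U (\<Phi> ` U) \<Phi> (the_inv_into U \<Phi>)"
        using oU xU inj\<Phi> hom by auto
    next
      fix x \<xi> u i assume "x \<in> U" "i \<in> {1..<r}"
      then show "ito_rate f g l m (\<phi> i) \<xi> u x = \<Phi> x (i + 1)" by (rule F2)
    next
      fix x \<xi> u assume x: "x \<in> U"
      show "ito_rate f g l m (\<phi> r) \<xi> u x =
         Sop f l (Siter (r - 1) f l h) \<xi> (the_inv_into U \<Phi> (\<Phi> x)) +
         Aop l m g (Siter (r - 1) f l h) \<xi> (the_inv_into U \<Phi> (\<Phi> x)) * u +
         1 / 2 * Hess m m (Siter (r - 1) f l h) (the_inv_into U \<Phi> (\<Phi> x)) * u\<^sup>2"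
        unfolding Fi[OF x] using ito_expand[OF sm\<phi>[of r]] \<phi>r by simp
      show "h x = \<Phi> x 1" by (rule F5)
    next
      fix x \<xi> u j assume x: "x \<in> U" and j: "j \<in> {r + 1..CARD('n)}"
      show "ito_rate f g l m (\<phi> j) \<xi> u x =
         Sop f l (\<phi> j) \<xi> (the_inv_into U \<Phi> (\<Phi> x)) + Aop l m g (\<phi> j) \<xi> (the_inv_into U \<Phi> (\<Phi> x)) * u +
         1 / 2 * Hess m m (\<phi> j) (the_inv_into U \<Phi> (\<Phi> x)) * u\<^sup>2"
        unfolding Fi[OF x] using ito_expand[OF sm\<phi>[of j]] by simp
    next
      fix z assume "z \<in> \<Phi> ` U"
      show "\<exists>\<alpha>1 \<beta>1 \<alpha>2 \<beta>2. \<forall>\<xi>.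
        Sop f l (Siter (r - 1) f l h) \<xi> (the_inv_into U \<Phi> z) = \<alpha>1 + \<beta>1 * \<xi> \<and>
        Aop l m g (Siter (r - 1) f l h) \<xi> (the_inv_into U \<Phi> z) = \<alpha>2 + \<beta>2 * \<xi>"
        by (rule affine_SA)
    next
      fix j z assume "j \<in> {r + 1..CARD('n)}" "z \<in> \<Phi> ` U"
      show "\<exists>\<alpha>1 \<beta>1 \<alpha>2 \<beta>2. \<forall>\<xi>.
        Sop f l (\<phi> j) \<xi> (the_inv_into U \<Phi> z) = \<alpha>1 + \<beta>1 * \<xi> \<and>
        Aop l m g (\<phi> j) \<xi> (the_inv_into U \<Phi> z) = \<alpha>2 + \<beta>2 * \<xi>"
        by (rule affine_SA)
    qed
  qed
qed

end
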